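(* Let $B=\bigoplus_{i\in\mathbb{Z}}B_i$ be a $\mathbb{Z}$-graded integral domain with $e(B)=1$. (a) If $S\subseteq\mathbb{Z}\setminus\{0\}$ is such that no height-$1$ prime ideal of $B$ contains $\bigcup_{i\in S}B_i$, then every element of $\Pi(B)$ is a prime factor of some element of $S$. (b) If no height-$1$ prime ideal of $B$ contains $\bigcup_{i\in\mathbb{Z}\setminus\{0\}}B_i$ and $B$ is noetherian, then $\Pi(B)$ is finite. (c) If some height-$1$ prime ideal of $B$ contains $\bigcup_{i\in\mathbb{Z}\setminus\{0\}}B_i$, then $\Pi(B)$ is the set of all prime numbers and $\Pi^*(B)=\{1\}$.
   Context: For a $\mathbb{Z}$-graded domain $C$, $e(C)=\gcd\{i\in\mathbb{Z}:C_i\neq0\}$. $\Pi(B)$ is the set of primes $p$ with $p\mid e(B/\mathfrak{p})$ for some homogeneous height-$1$ prime ideal $\mathfrak{p}$ of $B$; $\Pi^*(B)$ is the set of positive integers not divisible by any element of $\Pi(B)$. *)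

theory Defs
  imports "HOL-Algebra.Algebra"
begin

definition Z_grading :: "('a, 'b) ring_scheme \<Rightarrow> (int \<Rightarrow> 'a set) \<Rightarrow> bool" where
  "Z_grading R G \<longleftrightarrow>
     (\<forall>i. additive_subgroup (G i) R) \<and>
     (\<forall>i j. \<forall>x\<in>G i. \<forall>y\<in>G j. x \<otimes>\<^bsub>R\<^esub> y \<in> G (i + j)) \<and>
     (\<forall>x\<in>carrier R. \<exists>!f. (\<forall>i. f i \<in> G i) \<and> finite {i. f i \<noteq> \<zero>\<^bsub>R\<^esub>} \<and>
            x = finsum R f {i. f i \<noteq> \<zero>\<^bsub>R\<^esub>})"

definition graded_domain :: "('a, 'b) ring_scheme \<Rightarrow> (int \<Rightarrow> 'a set) \<Rightarrow> bool" where
  "graded_domain R G \<longleftrightarrow> domain R \<and> Z_grading R G"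

text \<open>e(C) = gcd of the degrees with nonzero component (Gcd on int is nonnegative).\<close>
definition grading_e :: "('a, 'b) ring_scheme \<Rightarrow> (int \<Rightarrow> 'a set) \<Rightarrow> int" where
  "grading_e R G = Gcd {i. G i \<noteq> {\<zero>\<^bsub>R\<^esub>}}"

definition quot_component :: "('a, 'b) ring_scheme \<Rightarrow> (int \<Rightarrow> 'a set) \<Rightarrow> 'a set \<Rightarrow> int \<Rightarrow> 'a set set" where
  "quot_component R G P i = (\<lambda>x. a_r_coset R P x) ` G i"

definition quot_e :: "('a, 'b) ring_scheme \<Rightarrow> (int \<Rightarrow> 'a set) \<Rightarrow> 'a set \<Rightarrow> int" where
  "quot_e R G P = grading_e (R Quot P) (quot_component R G P)"

definition homogeneous_ideal :: "('a, 'b) ring_scheme \<Rightarrow> (int \<Rightarrow> 'a set) \<Rightarrow> 'a set \<Rightarrow> bool" where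
  "homogeneous_ideal R G I \<longleftrightarrow> ideal I R \<and> genideal R (I \<inter> (\<Union>i. G i)) = I"

definition height1_prime :: "('a, 'b) ring_scheme \<Rightarrow> 'a set \<Rightarrow> bool" where
  "height1_prime R P \<longleftrightarrow> primeideal P R \<and> P \<noteq> {\<zero>\<^bsub>R\<^esub>} \<and>
     (\<forall>Q. primeideal Q R \<and> Q \<subset> P \<longrightarrow> Q = {\<zero>\<^bsub>R\<^esub>})"

definition Pi_set :: "('a, 'b) ring_scheme \<Rightarrow> (int \<Rightarrow> 'a set) \<Rightarrow> nat set" where
  "Pi_set R G = {p. Factorial_Ring.prime p \<and> (\<exists>P. homogeneous_ideal R G P \<and> height1_prime R P \<and> int p dvd quot_e R G P)}"

definition Pi_star :: "('a, 'b) ring_scheme \<Rightarrow> (int \<Rightarrow> 'a set) \<Rightarrow> nat set" where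
  "Pi_star R G = {n. 0 < n \<and> (\<forall>p\<in>Pi_set R G. \<not> p dvd n)}"

end

theory Submission
  imports Defs
begin


lemma (in ring) ideal_finsum:
  assumes "ideal I R" "finite A" "f \<in> A \<rightarrow> I"
  shows "finsum R f A \<in> I"
  using assms(2,3)
proof (induction A rule: finite_induct)
  case empty
  then show ?case using assms(1) by (simp add: additive_subgroup.zero_closed ideal.axioms(1))
next
  case (insert a A)
  have IC: "I \<subseteq> carrier R" using assms(1) by (simp add: additive_subgroup.a_subset ideal.axioms(1))
  have "finsum R f (insert a A) = f a \<oplus> finsum R f A"
    using insert IC by (intro finsum_insert) auto
  then show ?case using insert assms(1)
    by (simp add: additive_subgroup.a_closed ideal.axioms(1))
qed

lemma (in ring) Idl_compact:
  assumes Y: "Y \<subseteq> carrier R" and a: "a \<in> Idl Y"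
  shows "\<exists>Y'. finite Y' \<and> Y' \<subseteq> Y \<and> a \<in> Idl Y'"
proof -
  define U where "U = {a. \<exists>Y'. finite Y' \<and> Y' \<subseteq> Y \<and> a \<in> Idl Y'}"
  have idl: "ideal (Idl Y') R" if "Y' \<subseteq> Y" for Y' using that Y genideal_ideal by blast
  have mono: "Idl Y1 \<subseteq> Idl (Y1 \<union> Y2)" "Idl Y2 \<subseteq> Idl (Y1 \<union> Y2)" if "Y1 \<subseteq> Y" "Y2 \<subseteq> Y" for Y1 Y2
  proof -
    have c: "Y1 \<union> Y2 \<subseteq> carrier R" using that Y by blast
    show "Idl Y1 \<subseteq> Idl (Y1 \<union> Y2)" by (rule subset_Idl_subset[OF c]) blast
    show "Idl Y2 \<subseteq> Idl (Y1 \<union> Y2)" by (rule subset_Idl_subset[OF c]) blast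
  qed
  have "ideal U R"
  proof (rule idealI[OF ring_axioms])
    show "subgroup U (add_monoid R)"
    proof
      show "U \<subseteq> carrier (add_monoid R)"
        using idl unfolding U_def
        by (auto dest: ideal.axioms(1) additive_subgroup.a_subset)
      show "\<one>\<^bsub>add_monoid R\<^esub> \<in> U"
        unfolding U_def using idl[of "{}"]
        by (auto intro!: exI[of _ "{}"] simp: additive_subgroup.zero_closed ideal.axioms(1))
    next
      fix x y assume "x \<in> U" "y \<in> U"
      then obtain Y1 Y2 where h: "finite Y1" "Y1 \<subseteq> Y" "x \<in> Idl Y1" "finite Y2" "Y2 \<subseteq> Y" "y \<in> Idl Y2"
        unfolding U_def by blast
      then have "x \<in> Idl (Y1 \<union> Y2)" "y \<in> Idl (Y1 \<union> Y2)" using mono by blast+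
      moreover have "ideal (Idl (Y1 \<union> Y2)) R" using idl h by simp
      ultimately have "x \<oplus> y \<in> Idl (Y1 \<union> Y2)"
        by (simp add: additive_subgroup.a_closed ideal.axioms(1))
      then show "x \<otimes>\<^bsub>add_monoid R\<^esub> y \<in> U" unfolding U_def using h by auto
    next
      fix x assume "x \<in> U"
      then obtain Y1 where h: "finite Y1" "Y1 \<subseteq> Y" "x \<in> Idl Y1" unfolding U_def by blast
      then have "\<ominus> x \<in> Idl Y1" using idl
        by (simp add: additive_subgroup.a_inv_closed ideal.axioms(1))
      then show "inv\<^bsub>add_monoid R\<^esub> x \<in> U" unfolding U_def a_inv_def[symmetric] using h by auto
    qed
  next
    fix a x assume "a \<in> U" "x \<in> carrier R"
    then obtain Y1 where h: "finite Y1" "Y1 \<subseteq> Y" "a \<in> Idl Y1" unfolding U_def by blast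
    then have "x \<otimes> a \<in> Idl Y1" "a \<otimes> x \<in> Idl Y1" using idl \<open>x \<in> carrier R\<close>
      by (auto intro: ideal.I_l_closed ideal.I_r_closed)
    then show "x \<otimes> a \<in> U" "a \<otimes> x \<in> U" unfolding U_def using h by auto
  qed
  moreover have "Y \<subseteq> U"
  proof
    fix x assume "x \<in> Y"
    then show "x \<in> U" unfolding U_def using Y genideal_self' by (auto intro!: exI[of _ "{x}"])
  qed
  ultimately have "Idl Y \<subseteq> U" by (rule genideal_minimal)
  then show ?thesis using a unfolding U_def by blast
qed

lemma grading_carrier:
  assumes "Z_grading R G" shows "G i \<subseteq> carrier R"
  using assms unfolding Z_grading_def by (meson additive_subgroup.a_subset)

lemma quot_zero: "\<zero>\<^bsub>R Quot P\<^esub> = P" by (simp add: FactRing_def)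

lemma comp_nonzero:
  assumes "ring R" "ideal P R" "x \<in> G s" "x \<in> carrier R" "x \<notin> P"
  shows "quot_component R G P s \<noteq> {\<zero>\<^bsub>R Quot P\<^esub>}"
proof -
  interpret I: ideal P R by fact
  have "x \<in> P +>\<^bsub>R\<^esub> x" using assms(4) by (rule I.a_rcos_self)
  then have "P +>\<^bsub>R\<^esub> x \<noteq> P" using assms(5) by auto
  moreover have "P +>\<^bsub>R\<^esub> x \<in> quot_component R G P s"
    unfolding quot_component_def using assms(3) by blast
  ultimately show ?thesis by (auto simp: quot_zero)
qed

lemma partA:
  assumes gd: "graded_domain R G"
    and hyp: "\<forall>P. height1_prime R P \<longrightarrow> \<not> (\<Union>i\<in>S. G i) \<subseteq> P"
    and p: "p \<in> Pi_set R G"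
  shows "\<exists>s\<in>S. int p dvd s"
proof -
  obtain P where P: "height1_prime R P" "int p dvd quot_e R G P"
    using p unfolding Pi_set_def by blast
  then obtain s x where sx: "s \<in> S" "x \<in> G s" "x \<notin> P" using hyp by blast
  have dom: "domain R" "Z_grading R G" using gd unfolding graded_domain_def by auto
  then have R: "ring R" by (simp add: cring.axioms(1) domain.axioms(1))
  have I: "ideal P R" using P(1) unfolding height1_prime_def primeideal_def by blast
  have xc: "x \<in> carrier R" using grading_carrier[OF dom(2)] sx(2) by blast
  have "quot_component R G P s \<noteq> {\<zero>\<^bsub>R Quot P\<^esub>}"
    by (rule comp_nonzero[where G=G and s=s, OF R I sx(2) xc sx(3)])
  then have "quot_e R G P dvd s" unfolding quot_e_def grading_e_def by (simp add: Gcd_dvd)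
  then show ?thesis using P(2) sx(1) dvd_trans by blast
qed

lemma partB:
  assumes gd: "graded_domain R G"
    and hyp: "\<forall>P. height1_prime R P \<longrightarrow> \<not> (\<Union>i\<in>-{0}. G i) \<subseteq> P"
    and noe: "noetherian_ring R"
  shows "finite (Pi_set R G)"
proof -
  interpret N: noetherian_ring R by fact
  have zg: "Z_grading R G" using gd unfolding graded_domain_def by auto
  define Y where "Y = (\<Union>i\<in>-{0}. G i)"
  have Yc: "Y \<subseteq> carrier R" unfolding Y_def using grading_carrier[OF zg] by blast
  have J: "ideal (genideal R Y) R" using Yc by (rule N.genideal_ideal)
  obtain A where A: "A \<subseteq> carrier R" "finite A" "genideal R Y = genideal R A"
    using N.finetely_gen[OF J] by blast
  have "\<forall>a\<in>A. \<exists>Y'. finite Y' \<and> Y' \<subseteq> Y \<and> a \<in> genideal R Y'"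
  proof
    fix a assume "a \<in> A"
    then have "a \<in> genideal R Y" using A N.genideal_self[OF A(1)] by blast
    then show "\<exists>Y'. finite Y' \<and> Y' \<subseteq> Y \<and> a \<in> genideal R Y'" using N.Idl_compact[OF Yc] by blast
  qed
  then obtain F where F: "\<And>a. a \<in> A \<Longrightarrow> finite (F a) \<and> F a \<subseteq> Y \<and> a \<in> genideal R (F a)"
    by metis
  define Y' where "Y' = (\<Union>a\<in>A. F a)"
  have Y'f: "finite Y'" unfolding Y'_def using F A(2) by blast
  have Y'Y: "Y' \<subseteq> Y" unfolding Y'_def using F by blast
  have Y'c: "Y' \<subseteq> carrier R" using Y'Y Yc by blast
  have "A \<subseteq> genideal R Y'"
  proof
    fix a assume a: "a \<in> A"
    have "genideal R (F a) \<subseteq> genideal R Y'"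
      by (rule N.subset_Idl_subset[OF Y'c]) (use a in \<open>auto simp: Y'_def\<close>)
    then show "a \<in> genideal R Y'" using F[OF a] by blast
  qed
  then have JY': "genideal R Y \<subseteq> genideal R Y'" using A(3) N.genideal_minimal[OF N.genideal_ideal[OF Y'c]] by simp
  have "\<forall>x\<in>Y'. \<exists>i. i \<noteq> 0 \<and> x \<in> G i" using Y'Y unfolding Y_def by blast
  then obtain d where d: "\<And>x. x \<in> Y' \<Longrightarrow> d x \<noteq> 0 \<and> x \<in> G (d x)" by metis
  define S where "S = d ` Y'"
  have Sf: "finite S" unfolding S_def using Y'f by blast
  have S0: "0 \<notin> S" unfolding S_def using d by auto
  have hS: "\<forall>P. height1_prime R P \<longrightarrow> \<not> (\<Union>i\<in>S. G i) \<subseteq> P"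
  proof (intro allI impI notI)
    fix P assume P: "height1_prime R P" and sub: "(\<Union>i\<in>S. G i) \<subseteq> P"
    have I: "ideal P R" using P unfolding height1_prime_def primeideal_def by blast
    have "Y' \<subseteq> P" using d sub unfolding S_def by blast
    then have "genideal R Y' \<subseteq> P" using N.genideal_minimal[OF I] by blast
    then have "Y \<subseteq> P" using JY' N.genideal_self[OF Yc] by blast
    then show False using hyp P unfolding Y_def by blast
  qed
  have "Pi_set R G \<subseteq> (\<Union>s\<in>S. {p. int p dvd s})"
    using partA[OF gd hS] by blast
  moreover have "finite {p. int p dvd s}" if "s \<in> S" for s
  proof -
    have "s \<noteq> 0" using that S0 by auto
    then have "{p. int p dvd s} \<subseteq> {..nat \<bar>s\<bar>}"
      by (auto dest!: dvd_imp_le_int)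
    then show ?thesis using finite_subset by blast
  qed
  ultimately show ?thesis using Sf by (meson finite_UN_I finite_subset)
qed

lemma homog:
  assumes zg: "Z_grading R G" and dom: "domain R" and I: "ideal P R"
    and sub: "(\<Union>i\<in>-{0}. G i) \<subseteq> P"
  shows "homogeneous_ideal R G P"
proof -
  interpret D: domain R by fact
  interpret I: ideal P R by fact
  define K where "K = genideal R (P \<inter> (\<Union>i. G i))"
  have Kc: "P \<inter> (\<Union>i. G i) \<subseteq> carrier R" using I.a_subset by blast
  have K: "ideal K R" unfolding K_def using Kc by (rule D.genideal_ideal)
  interpret K: ideal K R by fact
  have KP: "K \<subseteq> P" unfolding K_def by (rule D.genideal_minimal[OF I]) blast
  have PKs: "P \<inter> (\<Union>i. G i) \<subseteq> K" unfolding K_def using D.genideal_self[OF Kc] .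
  have "P \<subseteq> K"
  proof
    fix x assume xP: "x \<in> P"
    then have xc: "x \<in> carrier R" using I.a_subset by blast
    obtain f where f: "\<forall>i. f i \<in> G i" "finite {i. f i \<noteq> \<zero>\<^bsub>R\<^esub>}"
       "x = finsum R f {i. f i \<noteq> \<zero>\<^bsub>R\<^esub>}"
      using zg xc unfolding Z_grading_def by metis
    define Dm where "Dm = {i. f i \<noteq> \<zero>\<^bsub>R\<^esub>}"
    have fc: "f \<in> Dm \<rightarrow> carrier R" using f(1) grading_carrier[OF zg] by blast
    have fin: "finite (Dm - {0})" using f(2) unfolding Dm_def by blast
    have restK: "finsum R f (Dm - {0}) \<in> K"
    proof (rule D.ideal_finsum[OF K fin])
      show "f \<in> Dm - {0} \<rightarrow> K" using f(1) sub PKs by blast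
    qed
    show "x \<in> K"
    proof (cases "0 \<in> Dm")
      case True
      have "Dm = insert 0 (Dm - {0})" using True by blast
      moreover have "finsum R f (insert 0 (Dm - {0})) = f 0 \<oplus>\<^bsub>R\<^esub> finsum R f (Dm - {0})"
        by (rule D.finsum_insert[OF fin]) (use fc True in auto)
      ultimately have "finsum R f Dm = f 0 \<oplus>\<^bsub>R\<^esub> finsum R f (Dm - {0})" by simp
      then have xe: "x = f 0 \<oplus>\<^bsub>R\<^esub> finsum R f (Dm - {0})" using f(3) unfolding Dm_def by simp
      have f0c: "f 0 \<in> carrier R" using fc True by blast
      have rc: "finsum R f (Dm - {0}) \<in> carrier R" using restK K.a_subset by blast
      have "f 0 = x \<ominus>\<^bsub>R\<^esub> finsum R f (Dm - {0})"
      proof -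
        have "x \<ominus>\<^bsub>R\<^esub> finsum R f (Dm - {0}) = f 0 \<oplus>\<^bsub>R\<^esub> (finsum R f (Dm - {0}) \<oplus>\<^bsub>R\<^esub> \<ominus>\<^bsub>R\<^esub> finsum R f (Dm - {0}))"
          unfolding xe a_minus_def using f0c rc by (rule D.a_assoc) (rule D.a_inv_closed[OF rc])
        also have "\<dots> = f 0" using f0c rc by (simp only: D.r_neg D.r_zero)
        finally show ?thesis by simp
      qed
      moreover have "finsum R f (Dm - {0}) \<in> P" using restK KP by blast
      ultimately have "f 0 \<in> P" using xP by (simp add: I.a_closed I.a_inv_closed a_minus_def)
      then have "f 0 \<in> K" using PKs f(1) by blast
      then show ?thesis using xe restK K.a_closed by simp
    next
      case False
      then have "Dm - {0} = Dm" by blast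
      then show ?thesis using restK f(3) unfolding Dm_def by simp
    qed
  qed
  then show ?thesis unfolding homogeneous_ideal_def K_def using KP I by (simp add: K_def)
qed

lemma partC:
  assumes gd: "graded_domain R G"
    and P: "height1_prime R P" and sub: "(\<Union>i\<in>-{0}. G i) \<subseteq> P"
  shows "Pi_set R G = {p. Factorial_Ring.prime p} \<and> Pi_star R G = {1}"
proof -
  have dom: "domain R" "Z_grading R G" using gd unfolding graded_domain_def by auto
  have I: "ideal P R" using P unfolding height1_prime_def primeideal_def by blast
  interpret I: ideal P R by fact
  have hom: "homogeneous_ideal R G P" using homog[OF dom(2) dom(1) I sub] .
  have "{i. quot_component R G P i \<noteq> {\<zero>\<^bsub>R Quot P\<^esub>}} \<subseteq> {0}"
  proof
    fix i assume i: "i \<in> {i. quot_component R G P i \<noteq> {\<zero>\<^bsub>R Quot P\<^esub>}}"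
    show "i \<in> {0}"
    proof (rule ccontr)
      assume "i \<notin> {0}"
      then have GP: "G i \<subseteq> P" using sub by blast
      have "\<zero>\<^bsub>R\<^esub> \<in> G i" using dom(2) unfolding Z_grading_def
        by (meson additive_subgroup.zero_closed)
      then have "G i \<noteq> {}" by blast
      moreover have "a_r_coset R P x = P" if "x \<in> G i" for x
        using GP that I.a_rcos_const by blast
      ultimately have "quot_component R G P i = {P}"
        unfolding quot_component_def by auto
      then show False using i by (simp add: quot_zero)
    qed
  qed
  then have e0: "quot_e R G P = 0" unfolding quot_e_def grading_e_def
    by (simp add: Gcd_0_iff)
  have PS: "Pi_set R G = {p. Factorial_Ring.prime p}"
    unfolding Pi_set_def using hom P e0 by auto
  have "Pi_star R G = {1}"
  proof -
    have "n = 1" if "0 < n" "\<forall>p. Factorial_Ring.prime p \<longrightarrow> \<not> p dvd n" for n :: nat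
      using that prime_factor_nat by blast
    then show ?thesis unfolding Pi_star_def PS by auto
  qed
  then show ?thesis using PS by blast
qed


theorem lemma3p12:
  fixes R :: "('a, 'b) ring_scheme" and G :: "int \<Rightarrow> 'a set"
  assumes "graded_domain R G" and "grading_e R G = 1"
  shows "(\<forall>S. 0 \<notin> S \<and> (\<forall>P. height1_prime R P \<longrightarrow> \<not> (\<Union>i\<in>S. G i) \<subseteq> P)
            \<longrightarrow> (\<forall>p\<in>Pi_set R G. \<exists>s\<in>S. int p dvd s))
       \<and> ((\<forall>P. height1_prime R P \<longrightarrow> \<not> (\<Union>i\<in>-{0}. G i) \<subseteq> P) \<and> noetherian_ring R
            \<longrightarrow> finite (Pi_set R G))
       \<and> ((\<exists>P. height1_prime R P \<and> (\<Union>i\<in>-{0}. G i) \<subseteq> P)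
            \<longrightarrow> Pi_set R G = {p. Factorial_Ring.prime p} \<and> Pi_star R G = {1})"
proof (intro conjI)
  show "\<forall>S. 0 \<notin> S \<and> (\<forall>P. height1_prime R P \<longrightarrow> \<not> (\<Union>i\<in>S. G i) \<subseteq> P)
            \<longrightarrow> (\<forall>p\<in>Pi_set R G. \<exists>s\<in>S. int p dvd s)"
    using partA[OF assms(1)] by blast
  show "(\<forall>P. height1_prime R P \<longrightarrow> \<not> (\<Union>i\<in>-{0}. G i) \<subseteq> P) \<and> noetherian_ring R
            \<longrightarrow> finite (Pi_set R G)"
    using partB[OF assms(1)] by blast
  show "(\<exists>P. height1_prime R P \<and> (\<Union>i\<in>-{0}. G i) \<subseteq> P)
            \<longrightarrow> Pi_set R G = {p. Factorial_Ring.prime p} \<and> Pi_star R G = {1}"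
    using partC[OF assms(1)] by blast
qed

end
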